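(* Let $Q$ be the law on $\mathbb{D}^\infty$ of a sequence of independent random variables, each with a rotation-invariant law on $\mathbb{D}$, and let $\mathrm{d}\mathbb{P}(\boldsymbol{\alpha},\theta)=\mathrm{d}Q(\boldsymbol{\alpha})\,\mathrm{d}\mu_{\boldsymbol{\alpha}}(\theta)$. For each fixed $\lambda\in\partial\mathbb{D}$, the measure $\mathbb{P}$ is invariant under the transformation \[ \big((\alpha_n)_{n\ge0},e^{i\theta}\big)\mapsto\big((\lambda^{n+1}\alpha_n)_{n\ge0},\overline{\lambda}e^{i\theta}\big). \]
   Context: For $\boldsymbol{\alpha}\in\mathbb{D}^\infty$, $\mu_{\boldsymbol{\alpha}}$ is the unique probability measure on $\partial\mathbb{D}$ whose monic orthogonal polynomials satisfy $\Phi_0=1$, $\Phi_{n+1}(z)=z\Phi_n(z)-\overline{\alpha_n}\Phi_n^*(z)$ with $P^*(z)=z^n\overline{P(1/\bar z)}$ for $\deg P=n$. $\mathbb{P}$ is the measure on $\mathbb{D}^\infty\times\partial\mathbb{D}$ with $\mathbb{P}(A\times B)=\mathbb{E}_Q[\mu_{\boldsymbol{\alpha}}(B)\mathbf{1}_{\{\boldsymbol{\alpha}\in A\}}]$. *)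

theory Defs
  imports "HOL-Probability.Probability" "HOL-Computational_Algebra.Polynomial"
begin

text \<open>Reversed polynomial P* (z) = z^n conj(P(1/conj z)) for a polynomial regarded as
  having degree n: the coefficient of z^k is conj(coeff P (n-k)).\<close>
definition pstar :: "nat \<Rightarrow> complex poly \<Rightarrow> complex poly" where
  "pstar n p = (\<Sum>k\<le>n. monom (cnj (coeff p (n - k))) k)"

fun opuc :: "(nat \<Rightarrow> complex) \<Rightarrow> nat \<Rightarrow> complex poly" where
  "opuc \<alpha> 0 = 1"
| "opuc \<alpha> (Suc n) = pCons 0 (opuc \<alpha> n) - smult (cnj (\<alpha> n)) (pstar n (opuc \<alpha> n))"

definition is_opuc_measure :: "(nat \<Rightarrow> complex) \<Rightarrow> complex measure \<Rightarrow> bool" where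
  "is_opuc_measure \<alpha> \<mu> \<longleftrightarrow>
     sets \<mu> = sets borel \<and> prob_space \<mu> \<and> emeasure \<mu> (sphere 0 1) = 1 \<and>
     (\<forall>n. \<forall>k<n. (\<integral>z. poly (opuc \<alpha> n) z * cnj (z ^ k) \<partial>\<mu>) = 0)"

definition mu_alpha :: "(nat \<Rightarrow> complex) \<Rightarrow> complex measure" where
  "mu_alpha \<alpha> = (THE \<mu>. is_opuc_measure \<alpha> \<mu>)"

text \<open>The underlying measurable space of pairs (alpha, e^{i theta}).\<close>
definition seq_circ_space :: "((nat \<Rightarrow> complex) \<times> complex) measure" where
  "seq_circ_space = (\<Pi>\<^sub>M n\<in>UNIV. (borel :: complex measure)) \<Otimes>\<^sub>M (borel :: complex measure)"

definition joint_P :: "(nat \<Rightarrow> complex) measure \<Rightarrow> ((nat \<Rightarrow> complex) \<times> complex) measure" where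
  "joint_P Q = measure_of (space seq_circ_space) (sets seq_circ_space)
      (\<lambda>S. \<integral>\<^sup>+ \<alpha>. emeasure (mu_alpha \<alpha>) (Pair \<alpha> -` S) \<partial>Q)"

end

theory Submission
  imports Defs "HOL-Complex_Analysis.Complex_Analysis"
begin

lemma coeff_pstar: "coeff (pstar n p) k = (if k \<le> n then cnj (coeff p (n - k)) else 0)"
  unfolding pstar_def by (auto simp: coeff_sum coeff_monom)

lemma degree_pstar: "degree (pstar n p) \<le> n"
  by (rule degree_le) (auto simp: coeff_pstar)

lemma degree_opuc: "degree (opuc a n) \<le> n"
proof (induction n)
  case 0 then show ?case by simp
next
  case (Suc n)
  have "degree (pCons 0 (opuc a n)) \<le> Suc n"
    using Suc degree_pCons_le[of 0 "opuc a n"] by linarith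
  moreover have "degree (smult (cnj (a n)) (pstar n (opuc a n))) \<le> Suc n"
    using degree_pstar[of n] by (meson degree_smult_le le_SucI order_trans)
  ultimately show ?case by (simp add: degree_diff_le)
qed

lemma coeff_opuc_top: "coeff (opuc a n) n = 1"
  by (induction n) (auto simp: coeff_pstar)

lemma poly_pstar: "poly (pstar n p) z = (\<Sum>k\<le>n. cnj (coeff p (n - k)) * z ^ k)"
  unfolding pstar_def by (simp add: poly_sum poly_monom)

lemma poly_as_sum: "degree (p::complex poly) \<le> n \<Longrightarrow> poly p z = (\<Sum>k\<le>n. coeff p k * z ^ k)"
proof -
  assume d: "degree p \<le> n"
  have "poly p z = (\<Sum>k\<le>degree p. coeff p k * z ^ k)" by (rule poly_altdef)
  also have "\<dots> = (\<Sum>k\<le>n. coeff p k * z ^ k)"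
    by (rule sum.mono_neutral_left) (use d in \<open>auto simp: coeff_eq_0\<close>)
  finally show ?thesis .
qed

lemma poly_pstar_circle:
  assumes "degree p \<le> n" "cmod z = 1"
  shows "poly (pstar n p) z = z ^ n * cnj (poly p z)"
proof -
  have "z * cnj z = 1" using complex_norm_square[of z] assms(2) by simp
  then have zc: "cnj z = inverse z" using inverse_unique by metis
  have z0: "z \<noteq> 0" using assms(2) by auto
  have "z ^ n * cnj (poly p z) = z ^ n * (\<Sum>k\<le>n. cnj (coeff p k) * inverse z ^ k)"
    by (simp add: poly_as_sum[OF assms(1)] zc power_inverse)
  also have "\<dots> = (\<Sum>k\<le>n. cnj (coeff p k) * (z ^ n * inverse z ^ k))"
    by (simp add: sum_distrib_left mult.left_commute)
  also have "\<dots> = (\<Sum>k\<le>n. cnj (coeff p k) * z ^ (n - k))"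
    by (intro sum.cong refl) (simp add: power_diff z0 divide_inverse power_inverse)
  also have "\<dots> = (\<Sum>k\<le>n. cnj (coeff p (n - k)) * z ^ k)"
    by (rule sum.reindex_bij_witness[where i="\<lambda>k. n - k" and j="\<lambda>k. n - k"]) auto
  finally show ?thesis by (simp add: poly_pstar)
qed

lemma pstar_opuc_Suc:
  "pstar (Suc n) (opuc a (Suc n)) = pstar n (opuc a n) - smult (a n) (pCons 0 (opuc a n))"
proof (rule poly_eqI)
  fix k
  have d: "coeff (opuc a n) j = 0" if "j > n" for j
    using degree_opuc[of a n] that by (simp add: coeff_eq_0)
  show "coeff (pstar (Suc n) (opuc a (Suc n))) k = coeff (pstar n (opuc a n) - smult (a n) (pCons 0 (opuc a n))) k"
  proof (cases k)
    case 0
    then show ?thesis by (simp add: coeff_pstar)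
  next
    case (Suc m)
    show ?thesis
    proof (cases "m \<le> n")
      case True
      have c1: "coeff (pCons 0 (opuc a n)) (n - m) = (if m = n then 0 else coeff (opuc a n) (n - Suc m))"
      proof (cases "n - m")
        case 0 then show ?thesis using True by (simp add: coeff_pCons)
      next
        case (Suc j)
        then have "j = n - Suc m" by arith
        then show ?thesis using Suc by (simp add: coeff_pCons)
      qed
      have c2: "coeff (pstar n (opuc a n)) (n - m) = cnj (coeff (opuc a n) m)"
        using True by (simp add: coeff_pstar)
      have c3: "coeff (pstar n (opuc a n)) (Suc m) = (if m = n then 0 else cnj (coeff (opuc a n) (n - Suc m)))"
        using True by (simp add: coeff_pstar)
      show ?thesis using True Suc c1 c2 c3 by (simp add: coeff_pstar)
    next
      case False
      then show ?thesis using Suc d by (simp add: coeff_pstar)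
    qed
  qed
qed

lemma poly_opuc_Suc: "poly (opuc a (Suc n)) z = z * poly (opuc a n) z - cnj (a n) * poly (pstar n (opuc a n)) z"
  by simp

lemma poly_opucstar_Suc: "poly (pstar (Suc n) (opuc a (Suc n))) z = poly (pstar n (opuc a n)) z - a n * z * poly (opuc a n) z"
  unfolding pstar_opuc_Suc by simp

lemma unit_cnj_mult: "cmod l = 1 \<Longrightarrow> l * cnj l = 1"
  using complex_norm_square[of l] by simp

lemma coeff_opuc_rot:
  assumes l: "cmod l = 1"
  shows "coeff (opuc (\<lambda>n. l ^ Suc n * a n) n) k = cnj l ^ n * l ^ k * coeff (opuc a n) k"
proof (induction n arbitrary: k)
  case 0 then show ?case by (cases k) (simp_all add: coeff_1)
next
  case (Suc n)
  have lc: "l * cnj l = 1" using unit_cnj_mult[OF l] .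
  let ?b = "\<lambda>n. l ^ Suc n * a n"
  have A: "coeff (pCons 0 (opuc ?b n)) k = cnj l ^ Suc n * l ^ k * coeff (pCons 0 (opuc a n)) k"
  proof (cases k)
    case 0 then show ?thesis by simp
  next
    case (Suc j)
    have "cnj l ^ n * l ^ j = cnj l ^ Suc n * l ^ Suc j"
      by (simp add: mult_ac) (metis lc)
    then show ?thesis using Suc.IH[of j] Suc by (simp add: coeff_pCons)
  qed
  have B: "cnj (?b n) * coeff (pstar n (opuc ?b n)) k = cnj l ^ Suc n * l ^ k * (cnj (a n) * coeff (pstar n (opuc a n)) k)"
  proof (cases "k \<le> n")
    case True
    have e: "l ^ n * cnj l ^ (n - k) = l ^ k"
    proof -
      have "l ^ n = l ^ k * l ^ (n - k)" using True by (simp add: power_add[symmetric])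
      then have "l ^ n * cnj l ^ (n - k) = l ^ k * (l * cnj l) ^ (n - k)" by (simp add: power_mult_distrib)
      then show ?thesis using lc by simp
    qed
    have "cnj (?b n) * coeff (pstar n (opuc ?b n)) k = cnj l ^ Suc n * cnj (a n) * (l ^ n * cnj l ^ (n - k)) * cnj (coeff (opuc a n) (n - k))"
      using True Suc.IH[of "n - k"] by (simp add: coeff_pstar mult_ac)
    then show ?thesis using e True by (simp add: coeff_pstar mult_ac)
  qed (simp add: coeff_pstar)
  have "coeff (opuc ?b (Suc n)) k = coeff (pCons 0 (opuc ?b n)) k - cnj (?b n) * coeff (pstar n (opuc ?b n)) k"
    by (simp only: opuc.simps coeff_diff coeff_smult)
  also have "\<dots> = cnj l ^ Suc n * l ^ k * (coeff (pCons 0 (opuc a n)) k - cnj (a n) * coeff (pstar n (opuc a n)) k)"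
    unfolding A B by (simp add: algebra_simps)
  also have "\<dots> = cnj l ^ Suc n * l ^ k * coeff (opuc a (Suc n)) k"
    by (simp only: opuc.simps coeff_diff coeff_smult)
  finally show ?case .
qed

lemma poly_opuc_rot:
  assumes l: "cmod l = 1"
  shows "poly (opuc (\<lambda>n. l ^ Suc n * a n) n) z = cnj l ^ n * poly (opuc a n) (l * z)"
proof -
  have "poly (opuc (\<lambda>n. l ^ Suc n * a n) n) z = (\<Sum>k\<le>n. cnj l ^ n * l ^ k * coeff (opuc a n) k * z ^ k)"
    using poly_as_sum[OF degree_opuc] coeff_opuc_rot[OF l] by (simp add: degree_opuc)
  also have "\<dots> = cnj l ^ n * (\<Sum>k\<le>n. coeff (opuc a n) k * (l * z) ^ k)"
    by (simp add: sum_distrib_left power_mult_distrib mult_ac)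
  also have "\<dots> = cnj l ^ n * poly (opuc a n) (l * z)"
    using poly_as_sum[OF degree_opuc] by simp
  finally show ?thesis .
qed

lemma is_opuc_rot:
  assumes l: "cmod l = 1" and mu: "is_opuc_measure a \<mu>"
  shows "is_opuc_measure (\<lambda>n. l ^ Suc n * a n) (distr \<mu> borel (\<lambda>z. cnj l * z))"
proof -
  have se: "sets \<mu> = sets borel" and ps: "prob_space \<mu>" and sph: "emeasure \<mu> (sphere 0 1) = 1"
    and orth: "\<And>n k. k < n \<Longrightarrow> (\<integral>z. poly (opuc a n) z * cnj (z ^ k) \<partial>\<mu>) = 0"
    using mu unfolding is_opuc_measure_def by auto
  have lc: "l * cnj l = 1" using unit_cnj_mult[OF l] .
  have meas: "(\<lambda>z. cnj l * z) \<in> measurable \<mu> borel"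
    unfolding measurable_cong_sets[OF se refl] by (intro borel_measurable_continuous_onI continuous_intros)
  have sp: "space \<mu> = UNIV" using sets_eq_imp_space_eq[OF se] by simp
  have pre: "(\<lambda>z. cnj l * z) -` sphere 0 1 \<inter> space \<mu> = sphere 0 1"
    using l by (auto simp: sp norm_mult)
  show ?thesis
    unfolding is_opuc_measure_def
  proof (intro conjI allI impI)
    show "sets (distr \<mu> borel (\<lambda>z. cnj l * z)) = sets borel" by simp
    show "prob_space (distr \<mu> borel (\<lambda>z. cnj l * z))"
      using prob_space.prob_space_distr[OF ps meas] .
    show "emeasure (distr \<mu> borel (\<lambda>z. cnj l * z)) (sphere 0 1) = 1"
      using sph by (simp add: emeasure_distr[OF meas] pre)
    fix n k :: nat assume kn: "k < n"
    have "(\<integral>z. poly (opuc (\<lambda>n. l ^ Suc n * a n) n) z * cnj (z ^ k) \<partial>distr \<mu> borel (\<lambda>z. cnj l * z))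
        = (\<integral>z. poly (opuc (\<lambda>n. l ^ Suc n * a n) n) (cnj l * z) * cnj ((cnj l * z) ^ k) \<partial>\<mu>)"
      by (rule integral_distr[OF meas]) (intro borel_measurable_continuous_onI continuous_intros)
    also have "\<dots> = (\<integral>z. (cnj l ^ n * l ^ k) * (poly (opuc a n) z * cnj (z ^ k)) \<partial>\<mu>)"
    proof (intro Bochner_Integration.integral_cong refl)
      fix z
      have h: "l * (cnj l * z) = z" using lc by (simp add: mult.assoc[symmetric])
      have e1: "poly (opuc (\<lambda>n. l ^ Suc n * a n) n) (cnj l * z) = cnj l ^ n * poly (opuc a n) z"
        using poly_opuc_rot[OF l, of a n "cnj l * z"] h by (simp only:)
      show "poly (opuc (\<lambda>n. l ^ Suc n * a n) n) (cnj l * z) * cnj ((cnj l * z) ^ k) = (cnj l ^ n * l ^ k) * (poly (opuc a n) z * cnj (z ^ k))"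
        unfolding e1 by (simp add: power_mult_distrib mult_ac)
    qed
    also have "\<dots> = 0" using orth[OF kn] by simp
    finally show "(\<integral>z. poly (opuc (\<lambda>n. l ^ Suc n * a n) n) z * cnj (z ^ k) \<partial>distr \<mu> borel (\<lambda>z. cnj l * z)) = 0" .
  qed
qed

lemma opuc_basic:
  assumes "is_opuc_measure a \<mu>"
  shows "sets \<mu> = sets borel" "prob_space \<mu>" "emeasure \<mu> (sphere 0 1) = 1"
    "\<And>n k. k < n \<Longrightarrow> (\<integral>z. poly (opuc a n) z * cnj (z ^ k) \<partial>\<mu>) = 0"
    "space \<mu> = UNIV"
proof -
  show s: "sets \<mu> = sets borel" using assms unfolding is_opuc_measure_def by blast
  show "prob_space \<mu>" using assms unfolding is_opuc_measure_def by blast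
  show "emeasure \<mu> (sphere 0 1) = 1" using assms unfolding is_opuc_measure_def by blast
  show "\<And>n k. k < n \<Longrightarrow> (\<integral>z. poly (opuc a n) z * cnj (z ^ k) \<partial>\<mu>) = 0"
    using assms unfolding is_opuc_measure_def by blast
  show "space \<mu> = UNIV" using sets_eq_imp_space_eq[OF s] by simp
qed

lemma opuc_AE_circle:
  assumes "is_opuc_measure a \<mu>"
  shows "AE z in \<mu>. cmod z = 1"
proof -
  note b = opuc_basic[OF assms]
  interpret prob_space \<mu> by (rule b(2))
  have ev: "sphere 0 1 \<in> events" using b(1) by simp
  have "AE z in \<mu>. z \<in> sphere 0 1"
    using AE_in_set_eq_1[OF ev] b(3) by (simp add: emeasure_eq_measure)
  then show ?thesis by simp
qed

lemma opuc_integrable: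
  assumes "is_opuc_measure a \<mu>" and f: "continuous_on UNIV f"
  shows "integrable \<mu> (f :: complex \<Rightarrow> 'b::{banach, second_countable_topology})"
proof -
  note b = opuc_basic[OF assms(1)]
  interpret prob_space \<mu> by (rule b(2))
  have "compact (f ` sphere 0 1)"
    by (rule compact_continuous_image) (use f continuous_on_subset in auto)
  then obtain B where B0: "\<forall>x\<in>f ` sphere 0 1. norm x \<le> B"
    using compact_imp_bounded bounded_iff by blast
  then have B: "\<And>z. z \<in> sphere 0 1 \<Longrightarrow> norm (f z) \<le> B" by blast
  have "AE z in \<mu>. norm (f z) \<le> B"
    using opuc_AE_circle[OF assms(1)] by eventually_elim (use B in auto)
  moreover have "f \<in> borel_measurable \<mu>"
    unfolding measurable_cong_sets[OF b(1) refl] using f by (rule borel_measurable_continuous_onI)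
  ultimately show ?thesis by (intro integrable_const_bound) auto
qed

lemma opuc_moments:
  assumes m1: "is_opuc_measure a \<mu>1" and m2: "is_opuc_measure a \<mu>2"
  shows "(\<integral>z. z ^ n \<partial>\<mu>1) = (\<integral>z. z ^ n \<partial>\<mu>2)"
proof (induction n rule: less_induct)
  case (less n)
  show ?case
  proof (cases n)
    case 0
    then show ?thesis using prob_space.prob_space[OF opuc_basic(2)[OF m1]] prob_space.prob_space[OF opuc_basic(2)[OF m2]]
      by simp
  next
    case (Suc m)
    let ?c = "coeff (opuc a n)"
    have pe: "poly (opuc a n) z = z ^ n + (\<Sum>i<n. ?c i * z ^ i)" for z
    proof -
      have "poly (opuc a n) z = (\<Sum>i\<le>n. ?c i * z ^ i)" by (rule poly_as_sum[OF degree_opuc])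
      also have "\<dots> = (\<Sum>i<n. ?c i * z ^ i) + ?c n * z ^ n" by (simp add: lessThan_Suc_atMost[symmetric])
      finally show ?thesis by (simp add: coeff_opuc_top)
    qed
    have key: "(\<integral>z. z ^ n \<partial>\<mu>) = - (\<Sum>i<n. ?c i * (\<integral>z. z ^ i \<partial>\<mu>))" if mm: "is_opuc_measure a \<mu>" for \<mu>
    proof -
      have int: "integrable \<mu> (\<lambda>z. z ^ i)" for i
        by (rule opuc_integrable[OF mm]) (intro continuous_intros)
      have "0 = (\<integral>z. poly (opuc a n) z * cnj (z ^ 0) \<partial>\<mu>)"
        using opuc_basic(4)[OF mm, of 0 n] Suc by simp
      also have "\<dots> = (\<integral>z. z ^ n + (\<Sum>i<n. ?c i * z ^ i) \<partial>\<mu>)" by (simp add: pe)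
      also have "\<dots> = (\<integral>z. z ^ n \<partial>\<mu>) + (\<Sum>i<n. ?c i * (\<integral>z. z ^ i \<partial>\<mu>))"
        using int by (simp add: integral_sum integrable_sum)
      finally show ?thesis by (simp add: eq_neg_iff_add_eq_0 add.commute)
    qed
    show ?thesis using key[OF m1] key[OF m2] less by simp
  qed
qed

lemma opuc_mixed:
  assumes m1: "is_opuc_measure a \<mu>1" and m2: "is_opuc_measure a \<mu>2"
  shows "(\<integral>z. z ^ j * cnj z ^ k \<partial>\<mu>1) = (\<integral>z. z ^ j * cnj z ^ k \<partial>\<mu>2)"
proof -
  have red: "(\<integral>z. z ^ j * cnj z ^ k \<partial>\<mu>) = (if k \<le> j then (\<integral>z. z ^ (j - k) \<partial>\<mu>) else cnj (\<integral>z. z ^ (k - j) \<partial>\<mu>))"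
    if mm: "is_opuc_measure a \<mu>" for \<mu>
  proof -
    have ae: "AE z in \<mu>. z ^ j * cnj z ^ k = (if k \<le> j then z ^ (j - k) else cnj (z ^ (k - j)))"
      using opuc_AE_circle[OF mm]
    proof eventually_elim
      case (elim z)
      have zc: "z * cnj z = 1" using complex_norm_square[of z] elim by simp
      show ?case
      proof (cases "k \<le> j")
        case True
        have "z ^ j * cnj z ^ k = z ^ (j - k) * (z * cnj z) ^ k"
          using True by (simp add: power_mult_distrib power_add[symmetric] mult_ac)
        then show ?thesis using True zc by simp
      next
        case False
        have "z ^ j * cnj z ^ k = cnj z ^ (k - j) * (z * cnj z) ^ j"
          using False by (simp add: power_mult_distrib power_add[symmetric] mult_ac)
        then show ?thesis using False zc by simp
      qed
    qed
    have ms: "measurable \<mu> = measurable borel" using opuc_basic(1)[OF mm] by (auto simp: fun_eq_iff intro!: measurable_cong_sets)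
    show ?thesis
    proof (cases "k \<le> j")
      case True
      have "(\<integral>z. z ^ j * cnj z ^ k \<partial>\<mu>) = (\<integral>z. z ^ (j - k) \<partial>\<mu>)"
        by (rule integral_cong_AE) (use ae True in \<open>auto simp: ms intro!: borel_measurable_continuous_onI continuous_intros\<close>)
      then show ?thesis using True by simp
    next
      case False
      have "(\<integral>z. z ^ j * cnj z ^ k \<partial>\<mu>) = (\<integral>z. cnj (z ^ (k - j)) \<partial>\<mu>)"
        by (rule integral_cong_AE) (use ae False in \<open>auto simp: ms simp del: complex_cnj_power intro!: borel_measurable_continuous_onI continuous_intros\<close>)
      also have "\<dots> = cnj (\<integral>z. z ^ (k - j) \<partial>\<mu>)" using Bochner_Integration.integral_cnj[of \<mu> "\<lambda>z. z ^ (k - j)"] by (simp only:)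
      finally show ?thesis using False by simp
    qed
  qed
  show ?thesis using red[OF m1] red[OF m2] opuc_moments[OF m1 m2] by simp
qed

definition tp :: "(complex \<times> nat \<times> nat) list \<Rightarrow> complex \<Rightarrow> complex" where
  "tp xs z = (\<Sum>(c, j, k)\<leftarrow>xs. c * (z ^ j * cnj z ^ k))"

lemma tp_Nil[simp]: "tp [] z = 0" by (simp add: tp_def)
lemma tp_Cons[simp]: "tp ((c,j,k) # xs) z = c * (z ^ j * cnj z ^ k) + tp xs z" by (simp add: tp_def)
lemma tp_append: "tp (xs @ ys) z = tp xs z + tp ys z" by (simp add: tp_def)

definition tpmul :: "(complex \<times> nat \<times> nat) list \<Rightarrow> (complex \<times> nat \<times> nat) list \<Rightarrow> (complex \<times> nat \<times> nat) list" where
  "tpmul xs ys = concat (map (\<lambda>(c, j, k). map (\<lambda>(d, p, q). (c * d, j + p, k + q)) ys) xs)"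

lemma tp_map_mono: "tp (map (\<lambda>(d, p, q). (c * d, j + p, k + q)) ys) z = c * (z ^ j * cnj z ^ k) * tp ys z"
proof (induction ys)
  case Nil then show ?case by simp
next
  case (Cons y ys)
  obtain d p q where y: "y = (d, p, q)" by (cases y) auto
  have "c * d * (z ^ (j + p) * cnj z ^ (k + q)) = c * (z ^ j * cnj z ^ k) * (d * (z ^ p * cnj z ^ q))"
    by (simp add: power_add mult_ac)
  then show ?case using Cons by (simp add: y distrib_left)
qed

lemma tp_mul: "tp (tpmul xs ys) z = tp xs z * tp ys z"
proof (induction xs)
  case Nil then show ?case by (simp add: tpmul_def)
next
  case (Cons x xs)
  obtain c j k where x: "x = (c, j, k)" by (cases x) auto
  have "tpmul (x # xs) ys = map (\<lambda>(d, p, q). (c * d, j + p, k + q)) ys @ tpmul xs ys"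
    by (simp add: tpmul_def x)
  then show ?case using Cons by (simp add: tp_append tp_map_mono x distrib_right)
qed

lemma opuc_tp:
  assumes m1: "is_opuc_measure a \<mu>1" and m2: "is_opuc_measure a \<mu>2"
  shows "(\<integral>z. tp xs z \<partial>\<mu>1) = (\<integral>z. tp xs z \<partial>\<mu>2)"
proof (induction xs)
  case Nil then show ?case by simp
next
  case (Cons x xs)
  obtain c j k where x: "x = (c, j, k)" by (cases x) auto
  have int: "integrable \<mu> (\<lambda>z. c * (z ^ j * cnj z ^ k))" "integrable \<mu> (tp xs)" if mm: "is_opuc_measure a \<mu>" for \<mu>
  proof -
    show "integrable \<mu> (\<lambda>z. c * (z ^ j * cnj z ^ k))"
      by (rule opuc_integrable[OF mm]) (intro continuous_intros)
    have "continuous_on UNIV (tp ys)" for ys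
    proof (induction ys)
      case Nil then show ?case by simp
    next
      case (Cons y ys)
      obtain c j k where y: "y = (c, j, k)" by (cases y) auto
      have "continuous_on UNIV (\<lambda>z. c * (z ^ j * cnj z ^ k) + tp ys z)"
        by (intro continuous_intros Cons)
      then show ?case by (simp add: y)
    qed
    then show "integrable \<mu> (tp xs)" by (rule opuc_integrable[OF mm])
  qed
  have "(\<integral>z. tp (x # xs) z \<partial>\<mu>) = c * (\<integral>z. z ^ j * cnj z ^ k \<partial>\<mu>) + (\<integral>z. tp xs z \<partial>\<mu>)"
    if mm: "is_opuc_measure a \<mu>" for \<mu>
    using int[OF mm] by (simp add: x)
  then show ?case using Cons opuc_mixed[OF m1 m2, of j k] m1 m2 by simp
qed

lemma real_poly_tp:
  fixes g :: "complex \<Rightarrow> real"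
  assumes "real_polynomial_function g"
  shows "\<exists>xs. \<forall>z. complex_of_real (g z) = tp xs z"
  using assms
proof (induction rule: real_polynomial_function.induct)
  case (linear f)
  have dec: "f z = Re z * f 1 + Im z * f \<i>" for z
  proof -
    have "z = Re z *\<^sub>R 1 + Im z *\<^sub>R \<i>" by (simp add: complex_eq_iff)
    then have "f z = f (Re z *\<^sub>R 1 + Im z *\<^sub>R \<i>)" by simp
    also have "\<dots> = Re z * f 1 + Im z * f \<i>"
      using linear by (simp add: linear_simps)
    finally show ?thesis .
  qed
  let ?xs = "[(f 1 / 2, 1, 0), (f 1 / 2, 0, 1), (- \<i> * f \<i> / 2, 1, 0), (\<i> * f \<i> / 2, 0, 1)]"
  have "complex_of_real (f z) = tp ?xs z" for z
  proof -
    have r: "complex_of_real (Re z) = (z + cnj z) / 2" by (simp add: complex_add_cnj)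
    have i: "complex_of_real (Im z) = - \<i> * (z - cnj z) / 2" by (simp add: complex_eq_iff)
    have "complex_of_real (f z) = complex_of_real (Re z) * f 1 + complex_of_real (Im z) * f \<i>"
      by (simp only: dec[of z] of_real_add of_real_mult)
    also have "\<dots> = (z + cnj z) / 2 * f 1 + (- \<i> * (z - cnj z) / 2) * f \<i>" by (simp only: r i)
    also have "\<dots> = tp ?xs z" by (simp add: field_simps)
    finally show ?thesis .
  qed
  then show ?case by blast
next
  case (const c)
  have "complex_of_real c = tp [(complex_of_real c, 0, 0)] z" for z by simp
  then show ?case by blast
next
  case (add f g)
  then obtain xs ys where "\<forall>z. complex_of_real (f z) = tp xs z" "\<forall>z. complex_of_real (g z) = tp ys z" by blast
  then have "\<forall>z. complex_of_real (f z + g z) = tp (xs @ ys) z" by (simp add: tp_append)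
  then show ?case by blast
next
  case (mult f g)
  then obtain xs ys where "\<forall>z. complex_of_real (f z) = tp xs z" "\<forall>z. complex_of_real (g z) = tp ys z" by blast
  then have "\<forall>z. complex_of_real (f z * g z) = tp (tpmul xs ys) z" by (simp add: tp_mul)
  then show ?case by blast
qed

lemma opuc_int_bound:
  assumes mm: "is_opuc_measure a \<mu>" and h: "continuous_on UNIV (h :: complex \<Rightarrow> real)"
    and b: "\<And>z. z \<in> sphere 0 1 \<Longrightarrow> \<bar>h z\<bar> \<le> e"
  shows "\<bar>\<integral>z. h z \<partial>\<mu>\<bar> \<le> e"
proof -
  interpret prob_space \<mu> by (rule opuc_basic(2)[OF mm])
  have ae: "AE z in \<mu>. norm (h z) \<le> e"
    using opuc_AE_circle[OF mm] by eventually_elim (use b in auto)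
  have "\<bar>\<integral>z. h z \<partial>\<mu>\<bar> = norm (\<integral>z. h z \<partial>\<mu>)" by simp
  also have "\<dots> \<le> (\<integral>z. norm (h z) \<partial>\<mu>)" by (rule integral_norm_bound)
  also have "\<dots> \<le> (\<integral>z. e \<partial>\<mu>)"
    by (rule integral_mono_AE) (use ae opuc_integrable[OF mm] h in \<open>auto intro: continuous_on_norm\<close>)
  also have "\<dots> = e" by (simp add: prob_space)
  finally show ?thesis .
qed

lemma opuc_cont_real:
  assumes m1: "is_opuc_measure a \<mu>1" and m2: "is_opuc_measure a \<mu>2"
    and f: "continuous_on UNIV (f :: complex \<Rightarrow> real)"
  shows "(\<integral>z. f z \<partial>\<mu>1) = (\<integral>z. f z \<partial>\<mu>2)"
proof -
  have peq: "(\<integral>z. g z \<partial>\<mu>1) = (\<integral>z. g z \<partial>\<mu>2)" if g: "real_polynomial_function g" for g :: "complex \<Rightarrow> real"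
  proof -
    obtain xs where xs: "\<forall>z. complex_of_real (g z) = tp xs z" using real_poly_tp[OF g] by blast
    have "complex_of_real (\<integral>z. g z \<partial>\<mu>) = (\<integral>z. tp xs z \<partial>\<mu>)" for \<mu>
      using xs by (simp add: integral_complex_of_real[symmetric])
    then show ?thesis using opuc_tp[OF m1 m2, of xs] by (metis of_real_eq_iff)
  qed
  have cg: "continuous_on UNIV g" if "real_polynomial_function g" for g :: "complex \<Rightarrow> real"
    using continuous_real_polymonial_function[OF that] by (simp add: continuous_at_imp_continuous_on)
  have le: "\<bar>(\<integral>z. f z \<partial>\<mu>1) - (\<integral>z. f z \<partial>\<mu>2)\<bar> \<le> 2 * e" if e: "e > 0" for e
  proof -
    obtain g where g: "real_polynomial_function g" and gb: "\<And>z. z \<in> sphere 0 1 \<Longrightarrow> \<bar>f z - g z\<bar> < e"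
      using Stone_Weierstrass_real_polynomial_function[of "sphere (0::complex) 1" f e] f e
      by (auto intro: continuous_on_subset)
    have d: "\<bar>(\<integral>z. f z \<partial>\<mu>) - (\<integral>z. g z \<partial>\<mu>)\<bar> \<le> e" if mm: "is_opuc_measure a \<mu>" for \<mu>
    proof -
      have "(\<integral>z. f z \<partial>\<mu>) - (\<integral>z. g z \<partial>\<mu>) = (\<integral>z. f z - g z \<partial>\<mu>)"
        by (rule Bochner_Integration.integral_diff[symmetric]) (use opuc_integrable[OF mm] f cg[OF g] in auto)
      also have "\<bar>\<dots>\<bar> \<le> e"
        by (rule opuc_int_bound[OF mm]) (use f cg[OF g] gb in \<open>auto intro!: continuous_intros less_imp_le\<close>)
      finally show ?thesis .
    qed
    show ?thesis using d[OF m1] d[OF m2] peq[OF g] by linarith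
  qed
  show ?thesis
  proof (rule ccontr)
    assume "(\<integral>z. f z \<partial>\<mu>1) \<noteq> (\<integral>z. f z \<partial>\<mu>2)"
    then have "\<bar>(\<integral>z. f z \<partial>\<mu>1) - (\<integral>z. f z \<partial>\<mu>2)\<bar> > 0" by simp
    with le[of "\<bar>(\<integral>z. f z \<partial>\<mu>1) - (\<integral>z. f z \<partial>\<mu>2)\<bar> / 4"] show False by simp
  qed
qed

lemma opuc_closed:
  assumes m1: "is_opuc_measure a \<mu>1" and m2: "is_opuc_measure a \<mu>2" and C: "closed C"
  shows "measure \<mu>1 C = measure \<mu>2 C"
proof (cases "C = {}")
  case True then show ?thesis by simp
next
  case ne: False
  define s where "s k z = max 0 (1 - real k * infdist z C)" for k z
  have cs: "continuous_on UNIV (s k)" for k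
    unfolding s_def by (intro continuous_intros continuous_on_infdist continuous_on_id)
  have lim: "(\<lambda>k. s k z) \<longlonglongrightarrow> indicator C z" for z
  proof (cases "z \<in> C")
    case True
    then show ?thesis by (simp add: s_def infdist_zero)
  next
    case False
    have d: "infdist z C > 0" using infdist_pos_not_in_closed[OF C ne False] .
    obtain N :: nat where N: "1 / infdist z C < real N" using reals_Archimedean2 by blast
    have "eventually (\<lambda>k. s k z = 0) sequentially"
      unfolding eventually_sequentially
    proof (intro exI allI impI)
      fix k assume "N \<le> k"
      then have "real N * infdist z C \<le> real k * infdist z C" using d by (simp add: mult_right_mono)
      moreover have "1 < real N * infdist z C" using N d by (simp add: field_simps)
      ultimately show "s k z = 0" by (simp add: s_def)
    qed
    then show ?thesis using False by (simp add: tendsto_eventually)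
  qed
  have conv: "(\<lambda>k. \<integral>z. s k z \<partial>\<mu>) \<longlonglongrightarrow> measure \<mu> C" if mm: "is_opuc_measure a \<mu>" for \<mu>
  proof -
    interpret prob_space \<mu> by (rule opuc_basic(2)[OF mm])
    have ms: "measurable \<mu> = measurable borel" using opuc_basic(1)[OF mm] by (auto simp: fun_eq_iff intro!: measurable_cong_sets)
    have "(\<lambda>k. \<integral>z. s k z \<partial>\<mu>) \<longlonglongrightarrow> (\<integral>z. indicator C z \<partial>\<mu>)"
    proof (rule integral_dominated_convergence[where w="\<lambda>_. 1"])
      show "indicat_real C \<in> borel_measurable \<mu>" unfolding ms using C by (intro borel_measurable_indicator) auto
      show "s k \<in> borel_measurable \<mu>" for k unfolding ms using cs by (rule borel_measurable_continuous_onI)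
      show "integrable \<mu> (\<lambda>_. 1::real)" by simp
      show "AE x in \<mu>. (\<lambda>k. s k x) \<longlonglongrightarrow> indicat_real C x" using lim by simp
      show "AE x in \<mu>. norm (s k x) \<le> 1" for k
        by (intro AE_I2) (auto simp: s_def infdist_nonneg)
    qed
    also have "(\<integral>z. indicator C z \<partial>\<mu>) = measure \<mu> C" by (simp add: opuc_basic(5)[OF mm])
    finally show ?thesis .
  qed
  have "(\<lambda>k. \<integral>z. s k z \<partial>\<mu>1) = (\<lambda>k. \<integral>z. s k z \<partial>\<mu>2)"
    using opuc_cont_real[OF m1 m2 cs] by simp
  then show ?thesis using conv[OF m1] conv[OF m2] LIMSEQ_unique by metis
qed

lemma opuc_unique:
  assumes m1: "is_opuc_measure a \<mu>1" and m2: "is_opuc_measure a \<mu>2"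
  shows "\<mu>1 = \<mu>2"
proof -
  interpret p1: prob_space \<mu>1 by (rule opuc_basic(2)[OF m1])
  interpret p2: prob_space \<mu>2 by (rule opuc_basic(2)[OF m2])
  have sg: "sets borel = sigma_sets (UNIV::complex set) (Collect closed)"
    by (subst borel_eq_closed) (simp add: sets_measure_of)
  show ?thesis
  proof (rule measure_eqI_generator_eq[where E="Collect closed" and \<Omega>=UNIV and A="\<lambda>_. UNIV"])
    show "Int_stable (Collect closed)" by (auto simp: Int_stable_def)
    show "Collect closed \<subseteq> Pow UNIV" by simp
    show "emeasure \<mu>1 X = emeasure \<mu>2 X" if "X \<in> Collect closed" for X
      using opuc_closed[OF m1 m2, of X] that by (simp add: p1.emeasure_eq_measure p2.emeasure_eq_measure)
    show "sets \<mu>1 = sigma_sets UNIV (Collect closed)" using opuc_basic(1)[OF m1] sg by simp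
    show "sets \<mu>2 = sigma_sets UNIV (Collect closed)" using opuc_basic(1)[OF m2] sg by simp
    show "range (\<lambda>_. UNIV) \<subseteq> Collect closed" by auto
    show "(\<Union>i. UNIV) = UNIV" by simp
    show "emeasure \<mu>1 UNIV \<noteq> \<infinity>" for i :: nat by simp
  qed
qed

lemma mu_alpha_eq:
  assumes "is_opuc_measure a \<mu>" shows "mu_alpha a = \<mu>"
  unfolding mu_alpha_def using assms opuc_unique by blast

lemma szego_ineq:
  fixes s x a :: complex
  shows "(cmod (s - a * x))\<^sup>2 - (cmod (x - cnj a * s))\<^sup>2 = (1 - (cmod a)\<^sup>2) * ((cmod s)\<^sup>2 - (cmod x)\<^sup>2)"
  unfolding cmod_power2 by (simp add: algebra_simps power2_eq_square)

lemma opuc_star_nonzero: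
  assumes a: "\<And>j. cmod (a j) < 1" and z: "cmod z \<le> 1"
  shows "poly (pstar n (opuc a n)) z \<noteq> 0 \<and> cmod (z * poly (opuc a n) z) \<le> cmod (poly (pstar n (opuc a n)) z)"
proof (induction n)
  case 0
  have "poly (pstar 0 (opuc a 0)) z = 1" by (simp add: poly_pstar)
  then show ?case using z by simp
next
  case (Suc n)
  define s where "s = poly (pstar n (opuc a n)) z"
  define x where "x = z * poly (opuc a n) z"
  have s0: "s \<noteq> 0" and xs: "cmod x \<le> cmod s" using Suc by (auto simp: s_def x_def)
  have S: "poly (pstar (Suc n) (opuc a (Suc n))) z = s - a n * x"
    unfolding s_def x_def by (subst poly_opucstar_Suc) (simp add: mult.assoc)
  have P: "z * poly (opuc a (Suc n)) z = z * (x - cnj (a n) * s)"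
    by (simp add: s_def x_def algebra_simps)
  have "cmod (a n * x) < cmod s"
  proof -
    have "cmod (a n * x) = cmod (a n) * cmod x" by (simp add: norm_mult)
    also have "\<dots> \<le> cmod (a n) * cmod s" using xs by (simp add: mult_left_mono)
    also have "\<dots> < cmod s" using a[of n] s0 by simp
    finally show ?thesis .
  qed
  then have nz: "s - a n * x \<noteq> 0" by auto
  have "(cmod (x - cnj (a n) * s))\<^sup>2 \<le> (cmod (s - a n * x))\<^sup>2"
  proof -
    have "0 \<le> (1 - (cmod (a n))\<^sup>2) * ((cmod s)\<^sup>2 - (cmod x)\<^sup>2)"
    proof (rule mult_nonneg_nonneg)
      show "0 \<le> 1 - (cmod (a n))\<^sup>2" using a[of n] by (simp add: abs_square_le_1 less_imp_le)
      show "0 \<le> (cmod s)\<^sup>2 - (cmod x)\<^sup>2" using xs by (simp add: power_mono)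
    qed
    then show ?thesis using szego_ineq[of s "a n" x] by linarith
  qed
  then have le: "cmod (x - cnj (a n) * s) \<le> cmod (s - a n * x)"
    by (rule power2_le_imp_le) simp
  have "cmod (z * (x - cnj (a n) * s)) \<le> cmod (x - cnj (a n) * s)"
    using z by (simp add: norm_mult mult_left_le_one_le)
  then show ?case unfolding S P using nz le by linarith
qed

lemma opuc_star_nonzero_ball:
  assumes a: "\<And>j. cmod (a j) < 1"
  obtains R where "R > 1" "\<And>z. z \<in> ball 0 R \<Longrightarrow> poly (pstar n (opuc a n)) z \<noteq> 0"
proof -
  let ?S = "poly (pstar n (opuc a n))"
  have op: "open {z. ?S z \<noteq> 0}" by (intro open_Collect_neq continuous_intros)
  have sub: "cball 0 1 \<subseteq> {z. ?S z \<noteq> 0}" using opuc_star_nonzero[OF a] by auto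
  obtain e where e: "e > 0" "(\<Union>x\<in>cball 0 1. ball x e) \<subseteq> {z. ?S z \<noteq> 0}"
    using compact_subset_open_imp_ball_epsilon_subset[OF compact_cball op sub] by blast
  have "?S z \<noteq> 0" if z: "z \<in> ball 0 (1 + e)" for z
  proof (cases "cmod z \<le> 1")
    case True then show ?thesis using sub by auto
  next
    case False
    have c1: "cmod z > 1" using False by simp
    then have z0: "z \<noteq> 0" by auto
    define w where "w = z / of_real (cmod z)"
    have w1: "w \<in> cball 0 1" using False by (simp add: w_def norm_divide)
    have "dist w z = cmod z - 1"
    proof -
      have "z - w = complex_of_real (1 - 1 / cmod z) * z" using False by (simp add: w_def field_simps)
      then have "dist w z = \<bar>1 - 1 / cmod z\<bar> * cmod z"
        by (simp only: dist_norm norm_minus_commute[of w z] norm_mult norm_of_real)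
      also have "\<bar>1 - 1 / cmod z\<bar> = 1 - 1 / cmod z" using c1 by (intro abs_of_nonneg) (simp add: divide_le_eq)
      also have "(1 - 1 / cmod z) * cmod z = cmod z - 1" using z0 by (simp add: field_simps)
      finally show ?thesis .
    qed
    then have "z \<in> ball w e" using z by (simp add: dist_commute)
    then show ?thesis using e w1 by blast
  qed
  then show ?thesis using that[of "1 + e"] e by auto
qed

definition ee :: "real \<Rightarrow> complex" where "ee t = circlepath 0 1 t"

lemma ee_eq: "ee t = exp (2 * of_real pi * \<i> * of_real t)"
  by (simp add: ee_def circlepath)

lemma ee_norm[simp]: "cmod (ee t) = 1"
  by (simp add: ee_eq norm_exp_eq_Re)

lemma continuous_ee[continuous_intros]: "continuous_on S ee"
  unfolding ee_eq by (intro continuous_intros)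

lemma isCont_ee: "isCont ee t"
  unfolding ee_eq by (intro continuous_intros)

lemma circle_int_zero:
  assumes g: "g holomorphic_on ball 0 R" and R: "R > 1"
  shows "(LINT t:{0..1}|lborel. g (ee t) * ee t) = 0"
proof -
  have sub: "path_image (circlepath 0 1) \<subseteq> ball 0 R" using R by (auto simp: path_image_circlepath)
  have "(g has_contour_integral 0) (circlepath 0 1)"
    by (rule Cauchy_theorem_convex_simple[OF g convex_ball]) (use sub in auto)
  then have "((\<lambda>t. g (ee t) * (complex_of_real (2 * pi) * \<i> * ee t)) has_integral 0) {0..1}"
    unfolding has_contour_integral vector_derivative_circlepath by (simp add: ee_eq ee_def[symmetric])
  then have "((\<lambda>t. g (ee t) * (complex_of_real (2 * pi) * \<i> * ee t) * inverse (complex_of_real (2 * pi) * \<i>)) has_integral 0 * inverse (complex_of_real (2 * pi) * \<i>)) {0..1}"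
    by (rule has_integral_mult_left)
  then have hi: "((\<lambda>t. g (ee t) * ee t) has_integral 0) {0..1}"
    by (simp add: field_simps)
  have cont: "continuous_on {0..1} (\<lambda>t. g (ee t) * ee t)"
  proof (intro continuous_intros)
    show "continuous_on {0..1} (\<lambda>t. g (ee t))"
      by (rule continuous_on_compose2[OF holomorphic_on_imp_continuous_on[OF g] continuous_ee]) (use R in auto)
  qed
  have si: "set_integrable lborel {0..1} (\<lambda>t. g (ee t) * ee t)"
    unfolding set_integrable_def by (rule borel_integrable_compact[OF compact_Icc cont])
  show ?thesis using set_borel_integral_eq_integral(2)[OF si] integral_unique[OF hi] by simp
qed

definition wI :: "(nat \<Rightarrow> complex) \<Rightarrow> nat \<Rightarrow> (complex \<Rightarrow> complex) \<Rightarrow> complex" where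
  "wI a N h = (LINT t:{0..1}|lborel. h (ee t) / (poly (pstar N (opuc a N)) (ee t) * cnj (poly (pstar N (opuc a N)) (ee t))))"

lemma set_integral_cnj: "(LINT t:A|M. cnj (f t)) = cnj (LINT t:A|M. f t)"
  unfolding set_lebesgue_integral_def
  by (simp add: Bochner_Integration.integral_cnj[symmetric] complex_cnj_scaleR)

context
  fixes a :: "nat \<Rightarrow> complex" and N :: nat
  assumes a: "\<And>j. cmod (a j) < 1"
begin

lemma SN_nz: "cmod z \<le> 1 \<Longrightarrow> poly (pstar N (opuc a N)) z \<noteq> 0"
  using opuc_star_nonzero[where a=a and z=z and n=N] a by blast

lemma wI_integrable:
  assumes h: "continuous_on UNIV h"
  shows "set_integrable lborel {0..1} (\<lambda>t. h (ee t) / (poly (pstar N (opuc a N)) (ee t) * cnj (poly (pstar N (opuc a N)) (ee t))))"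
proof -
  have "continuous_on {0..1} (\<lambda>t. h (ee t) / (poly (pstar N (opuc a N)) (ee t) * cnj (poly (pstar N (opuc a N)) (ee t))))"
  proof (intro continuous_intros)
    show "continuous_on {0..1} (\<lambda>t. h (ee t))"
      by (rule continuous_on_compose2[OF h continuous_ee]) auto
    show "\<forall>t\<in>{0..1}. poly (pstar N (opuc a N)) (ee t) * cnj (poly (pstar N (opuc a N)) (ee t)) \<noteq> 0"
      using SN_nz by simp
  qed
  then show ?thesis unfolding set_integrable_def by (rule borel_integrable_compact[OF compact_Icc])
qed

lemma wI_add:
  assumes "continuous_on UNIV h1" "continuous_on UNIV h2"
  shows "wI a N (\<lambda>z. h1 z + h2 z) = wI a N h1 + wI a N h2"
  unfolding wI_def add_divide_distrib
  by (rule set_integral_add(2)) (use wI_integrable assms in auto)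

lemma wI_mult: "wI a N (\<lambda>z. c * h z) = c * wI a N h"
  unfolding wI_def by (simp add: set_integral_mult_right[symmetric] mult.assoc times_divide_eq_right)

lemma wI_cong:
  assumes "\<And>z. cmod z = 1 \<Longrightarrow> h1 z = h2 z"
  shows "wI a N h1 = wI a N h2"
  unfolding wI_def by (rule set_lebesgue_integral_cong) (use assms in auto)

lemma wI_cong_zero:
  assumes "\<And>z. cmod z = 1 \<Longrightarrow> h z / (poly (pstar N (opuc a N)) z * cnj (poly (pstar N (opuc a N)) z)) = g z * z" and g: "g holomorphic_on ball 0 R" "R > 1"
  shows "wI a N h = 0"
proof -
  have "wI a N h = (LINT t:{0..1}|lborel. g (ee t) * ee t)"
    unfolding wI_def by (rule set_lebesgue_integral_cong) (use assms in auto)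
  also have "\<dots> = 0" by (rule circle_int_zero[OF g])
  finally show ?thesis .
qed

lemma wI_cong_zero_cnj:
  assumes "\<And>z. cmod z = 1 \<Longrightarrow> h z / (poly (pstar N (opuc a N)) z * cnj (poly (pstar N (opuc a N)) z)) = cnj (g z * z)" and g: "g holomorphic_on ball 0 R" "R > 1"
  shows "wI a N h = 0"
proof -
  have "wI a N h = (LINT t:{0..1}|lborel. cnj (g (ee t) * ee t))"
    unfolding wI_def by (rule set_lebesgue_integral_cong) (use assms in auto)
  also have "\<dots> = cnj (LINT t:{0..1}|lborel. g (ee t) * ee t)" by (rule set_integral_cnj)
  also have "\<dots> = 0" by (simp add: circle_int_zero[OF g])
  finally show ?thesis .
qed

lemma base_P:
  assumes k: "k < N"
  shows "wI a N (\<lambda>z. poly (opuc a N) z * cnj (z ^ k)) = 0"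
proof -
  obtain R where R: "R > 1" "\<And>z. z \<in> ball 0 R \<Longrightarrow> poly (pstar N (opuc a N)) z \<noteq> 0"
    using opuc_star_nonzero_ball[where a=a and n=N] a by blast
  obtain m where m: "N = Suc (k + m)" using k less_iff_Suc_add by auto
  show ?thesis
  proof (rule wI_cong_zero[where g="\<lambda>z. z ^ m / poly (pstar N (opuc a N)) z"])
    show "(\<lambda>z. z ^ m / poly (pstar N (opuc a N)) z) holomorphic_on ball 0 R" using R(2) by (intro holomorphic_intros) auto
    show "R > 1" by (rule R)
    fix z :: complex assume z: "cmod z = 1"
    have z0: "z \<noteq> 0" using z by auto
    have zc: "cnj z = inverse z"
      using complex_norm_square[of z] z inverse_unique[of z "cnj z"] by simp
    have S: "poly (pstar N (opuc a N)) z = z ^ N * cnj (poly (opuc a N) z)" by (rule poly_pstar_circle[OF degree_opuc z])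
    have S0: "poly (pstar N (opuc a N)) z \<noteq> 0" using SN_nz z by simp
    have P0: "poly (opuc a N) z \<noteq> 0" using S0 S by auto
    have cS: "cnj (poly (pstar N (opuc a N)) z) = inverse z ^ N * poly (opuc a N) z" using S by (simp add: zc power_inverse)
    show "poly (opuc a N) z * cnj (z ^ k) / (poly (pstar N (opuc a N)) z * cnj (poly (pstar N (opuc a N)) z)) = z ^ m / poly (pstar N (opuc a N)) z * z"
    proof -
      have e1: "cnj (z ^ k) = inverse (z ^ k)" by (simp add: zc power_inverse)
      have e2: "z ^ N = z ^ k * z ^ m * z" by (simp add: m power_add mult_ac)
      have cS': "cnj (poly (pstar N (opuc a N)) z) = inverse (z ^ k * z ^ m * z) * poly (opuc a N) z"
        unfolding cS e2[symmetric] by (simp add: power_inverse)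
      have nz: "z ^ k \<noteq> 0" "z ^ m \<noteq> 0" using z0 by auto
      show ?thesis unfolding e1 cS' using nz z0 S0 P0 by (simp add: field_simps)
    qed
  qed
qed

lemma base_S:
  assumes k: "1 \<le> k" "k \<le> N"
  shows "wI a N (\<lambda>z. poly (pstar N (opuc a N)) z * cnj (z ^ k)) = 0"
proof -
  obtain R where R: "R > 1" "\<And>z. z \<in> ball 0 R \<Longrightarrow> poly (pstar N (opuc a N)) z \<noteq> 0"
    using opuc_star_nonzero_ball[where a=a and n=N] a by blast
  obtain m where m: "k = Suc m" using k by (cases k) auto
  show ?thesis
  proof (rule wI_cong_zero_cnj[where g="\<lambda>z. z ^ m / poly (pstar N (opuc a N)) z"])
    show "(\<lambda>z. z ^ m / poly (pstar N (opuc a N)) z) holomorphic_on ball 0 R" using R(2) by (intro holomorphic_intros) auto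
    show "R > 1" by (rule R)
    fix z :: complex assume z: "cmod z = 1"
    have S0: "poly (pstar N (opuc a N)) z \<noteq> 0" using SN_nz z by simp
    show "poly (pstar N (opuc a N)) z * cnj (z ^ k) / (poly (pstar N (opuc a N)) z * cnj (poly (pstar N (opuc a N)) z)) = cnj (z ^ m / poly (pstar N (opuc a N)) z * z)"
      using S0 by (simp add: m field_simps)
  qed
qed

end

lemma idP: "poly (opuc a (Suc j)) z + cnj (a j) * poly (pstar (Suc j) (opuc a (Suc j))) z
   = (1 - a j * cnj (a j)) * (z * poly (opuc a j) z)"
  by (subst poly_opucstar_Suc) (simp add: algebra_simps)

lemma idS: "poly (pstar (Suc j) (opuc a (Suc j))) z + a j * poly (opuc a (Suc j)) z
   = (1 - a j * cnj (a j)) * poly (pstar j (opuc a j)) z"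
  by (subst poly_opucstar_Suc) (simp add: algebra_simps)

context
  fixes a :: "nat \<Rightarrow> complex" and N :: nat
  assumes a: "\<And>j. cmod (a j) < 1"
begin

lemma wI_lin:
  assumes "continuous_on UNIV A" "continuous_on UNIV B"
  shows "wI a N (\<lambda>z. c * (A z + d * B z)) = c * (wI a N A + d * wI a N B)"
proof -
  have "wI a N (\<lambda>z. c * (A z + d * B z)) = c * wI a N (\<lambda>z. A z + d * B z)"
    by (rule wI_mult[where a=a, OF a])
  also have "wI a N (\<lambda>z. A z + d * B z) = wI a N A + wI a N (\<lambda>z. d * B z)"
    by (rule wI_add[where a=a, OF a]) (use assms in \<open>auto intro!: continuous_intros\<close>)
  also have "wI a N (\<lambda>z. d * B z) = d * wI a N B"
    by (rule wI_mult[where a=a, OF a])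
  finally show ?thesis .
qed

lemma descent:
  assumes hP: "\<forall>k<Suc j. wI a N (\<lambda>z. poly (opuc a (Suc j)) z * cnj (z ^ k)) = 0"
    and hS: "\<forall>k. 1 \<le> k \<and> k \<le> Suc j \<longrightarrow> wI a N (\<lambda>z. poly (pstar (Suc j) (opuc a (Suc j))) z * cnj (z ^ k)) = 0"
  shows "(\<forall>k<j. wI a N (\<lambda>z. poly (opuc a j) z * cnj (z ^ k)) = 0) \<and>
         (\<forall>k. 1 \<le> k \<and> k \<le> j \<longrightarrow> wI a N (\<lambda>z. poly (pstar j (opuc a j)) z * cnj (z ^ k)) = 0)"
proof -
  define c0 where "c0 = 1 - a j * cnj (a j)"
  have "a j * cnj (a j) = complex_of_real ((cmod (a j))\<^sup>2)" by (rule complex_norm_square[symmetric])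
  moreover have "(cmod (a j))\<^sup>2 < 1" using a[of j] by (simp add: abs_square_less_1)
  ultimately have c0: "c0 \<noteq> 0" unfolding c0_def by (metis eq_iff_diff_eq_0 less_irrefl of_real_eq_1_iff)
  let ?P1 = "poly (opuc a (Suc j))" and ?S1 = "poly (pstar (Suc j) (opuc a (Suc j)))"
  let ?P = "poly (opuc a j)" and ?S = "poly (pstar j (opuc a j))"
  have "wI a N (\<lambda>z. ?P z * cnj (z ^ k)) = 0" if k: "k < j" for k
  proof -
    have "wI a N (\<lambda>z. ?P z * cnj (z ^ k)) =
          wI a N (\<lambda>z. inverse c0 * (?P1 z * cnj (z ^ Suc k) + cnj (a j) * (?S1 z * cnj (z ^ Suc k))))"
    proof (rule wI_cong[where a=a, OF a])
      fix z :: complex assume z: "cmod z = 1"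
      have zc: "z * cnj z = 1" using complex_norm_square[of z] z by simp
      have "?P1 z * cnj (z ^ Suc k) + cnj (a j) * (?S1 z * cnj (z ^ Suc k))
            = (?P1 z + cnj (a j) * ?S1 z) * cnj (z ^ Suc k)" by (simp add: algebra_simps)
      also have "\<dots> = c0 * (?P z * cnj (z ^ k)) * (z * cnj z)"
        unfolding idP c0_def by (simp add: mult_ac del: opuc.simps)
      finally show "?P z * cnj (z ^ k) = inverse c0 * (?P1 z * cnj (z ^ Suc k) + cnj (a j) * (?S1 z * cnj (z ^ Suc k)))"
        using zc c0 by simp
    qed
    also have "\<dots> = inverse c0 * (wI a N (\<lambda>z. ?P1 z * cnj (z ^ Suc k)) + cnj (a j) * wI a N (\<lambda>z. ?S1 z * cnj (z ^ Suc k)))"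
      by (rule wI_lin) (intro continuous_intros)+
    also have "\<dots> = 0"
    proof -
      have h1: "wI a N (\<lambda>z. ?P1 z * cnj (z ^ Suc k)) = 0" using hP k by blast
      have h2: "wI a N (\<lambda>z. ?S1 z * cnj (z ^ Suc k)) = 0" using hS[rule_format, of "Suc k"] k by linarith
      show ?thesis unfolding h1 h2 by simp
    qed
    finally show ?thesis .
  qed
  moreover have "wI a N (\<lambda>z. ?S z * cnj (z ^ k)) = 0" if k: "1 \<le> k" "k \<le> j" for k
  proof -
    have "wI a N (\<lambda>z. ?S z * cnj (z ^ k)) =
          wI a N (\<lambda>z. inverse c0 * (?S1 z * cnj (z ^ k) + a j * (?P1 z * cnj (z ^ k))))"
    proof (rule wI_cong[where a=a, OF a])
      fix z :: complex assume z: "cmod z = 1"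
      have "?S1 z * cnj (z ^ k) + a j * (?P1 z * cnj (z ^ k)) = (?S1 z + a j * ?P1 z) * cnj (z ^ k)"
        by (simp add: algebra_simps)
      also have "\<dots> = c0 * (?S z * cnj (z ^ k))"
        unfolding idS c0_def by (simp add: mult_ac del: opuc.simps)
      finally show "?S z * cnj (z ^ k) = inverse c0 * (?S1 z * cnj (z ^ k) + a j * (?P1 z * cnj (z ^ k)))"
        using c0 by simp
    qed
    also have "\<dots> = inverse c0 * (wI a N (\<lambda>z. ?S1 z * cnj (z ^ k)) + a j * wI a N (\<lambda>z. ?P1 z * cnj (z ^ k)))"
      by (rule wI_lin) (intro continuous_intros)+
    also have "\<dots> = 0" using hP hS k by (simp del: opuc.simps complex_cnj_power)
    finally show ?thesis .
  qed
  ultimately show ?thesis by blast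
qed

lemma BS_orth:
  assumes "j \<le> N" "k < j"
  shows "wI a N (\<lambda>z. poly (opuc a j) z * cnj (z ^ k)) = 0"
proof -
  have "(\<forall>k<N - i. wI a N (\<lambda>z. poly (opuc a (N - i)) z * cnj (z ^ k)) = 0) \<and>
        (\<forall>k. 1 \<le> k \<and> k \<le> N - i \<longrightarrow> wI a N (\<lambda>z. poly (pstar (N - i) (opuc a (N - i))) z * cnj (z ^ k)) = 0)"
    if "i \<le> N" for i
    using that
  proof (induction i)
    case 0
    then show ?case using base_P[where a=a, OF a] base_S[where a=a, OF a] by (simp del: opuc.simps complex_cnj_power)
  next
    case (Suc i)
    have e: "N - i = Suc (N - Suc i)" using Suc.prems by simp
    show ?case using descent[of "N - Suc i"] Suc.IH Suc.prems unfolding e[symmetric] by (simp del: opuc.simps complex_cnj_power)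
  qed
  from this[of "N - j"] assms show ?thesis by (simp del: opuc.simps complex_cnj_power)
qed

end

definition Wt :: "(nat \<Rightarrow> complex) \<Rightarrow> nat \<Rightarrow> real \<Rightarrow> real" where
  "Wt a N t = 1 / (cmod (poly (pstar N (opuc a N)) (ee t)))\<^sup>2"

definition Cn :: "(nat \<Rightarrow> complex) \<Rightarrow> nat \<Rightarrow> real" where
  "Cn a N = (LINT t:{0..1}|lborel. Wt a N t)"

definition dens :: "(nat \<Rightarrow> complex) \<Rightarrow> nat \<Rightarrow> real \<Rightarrow> real" where
  "dens a N t = indicator {0..1} t * Wt a N t / Cn a N"

definition rho :: "(nat \<Rightarrow> complex) \<Rightarrow> nat \<Rightarrow> real measure" where
  "rho a N = density lborel (\<lambda>t. ennreal (dens a N t))"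

lemma set_integral_const_01: "(LINT (t::real):{0..1}|lborel. (c::real)) = c"
  unfolding set_lebesgue_integral_def by (simp add: measure_lborel_Icc)

context
  fixes a :: "nat \<Rightarrow> complex" and N :: nat
  assumes a: "\<And>j. cmod (a j) < 1"
begin

lemma Wt_pos: "Wt a N t > 0"
  using SN_nz[where a=a and N=N, OF a, of "ee t"] by (simp add: Wt_def)

lemma Wt_cont: "continuous_on S (Wt a N)"
  unfolding Wt_def
proof (intro continuous_intros)
  show "\<forall>t\<in>S. (cmod (poly (pstar N (opuc a N)) (ee t)))\<^sup>2 \<noteq> 0"
    using SN_nz[where a=a and N=N, OF a] by simp
qed

lemma Wt_int: "set_integrable lborel {0..1} (Wt a N)"
  unfolding set_integrable_def by (rule borel_integrable_compact[OF compact_Icc Wt_cont])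

lemma Cn_pos: "Cn a N > 0"
proof -
  obtain x0 where x0: "x0 \<in> {0..1::real}" "\<And>y. y \<in> {0..1} \<Longrightarrow> Wt a N x0 \<le> Wt a N y"
    using continuous_attains_inf[OF compact_Icc _ Wt_cont, of 0 1] by auto
  have "Wt a N x0 = (LINT (t::real):{0..1}|lborel. Wt a N x0)" by (rule set_integral_const_01[of "Wt a N x0", symmetric])
  also have "\<dots> \<le> Cn a N" unfolding Cn_def
    by (rule set_integral_mono) (use x0 Wt_int in \<open>auto simp: set_integrable_def\<close>)
  finally show ?thesis using Wt_pos[of x0] by simp
qed

lemma dens_nonneg: "dens a N t \<ge> 0"
  using Wt_pos[of t] Cn_pos by (simp add: dens_def)

lemma dens_meas[measurable]: "dens a N \<in> borel_measurable borel"
proof -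
  have "(\<lambda>t. indicator {0..1} t * Wt a N t) \<in> borel_measurable borel"
    using borel_integrable_compact[OF compact_Icc Wt_cont] by (simp add: borel_measurable_integrable)
  then show ?thesis unfolding dens_def by measurable
qed

lemma emeasure_rho: "A \<in> sets borel \<Longrightarrow> emeasure (rho a N) A = (\<integral>\<^sup>+ t. ennreal (dens a N t) * indicator A t \<partial>lborel)"
  unfolding rho_def by (rule emeasure_density) auto

lemma dens_integrable: "integrable lborel (dens a N)"
proof -
  have "integrable lborel (\<lambda>t. indicator {0..1} t * Wt a N t)"
    using borel_integrable_compact[OF compact_Icc Wt_cont] by simp
  then show ?thesis unfolding dens_def by simp
qed

lemma dens_integral: "(LINT t|lborel. dens a N t) = 1"
proof -
  have "(LINT t|lborel. dens a N t) = (LINT t|lborel. indicator {0..1} t * Wt a N t) / Cn a N"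
    unfolding dens_def by simp
  also have "(LINT t|lborel. indicator {0..1} t * Wt a N t) = Cn a N"
    unfolding Cn_def set_lebesgue_integral_def by simp
  finally show ?thesis using Cn_pos by simp
qed

lemma rho_sets[simp]: "sets (rho a N) = sets borel"
  by (simp add: rho_def)

lemma rho_space[simp]: "space (rho a N) = UNIV"
  by (simp add: rho_def)

lemma rho_prob: "prob_space (rho a N)"
proof (rule prob_spaceI)
  have "emeasure (rho a N) (space (rho a N)) = (\<integral>\<^sup>+ t. ennreal (dens a N t) \<partial>lborel)"
    by (simp add: emeasure_rho)
  also have "\<dots> = ennreal (LINT t|lborel. dens a N t)"
    by (rule nn_integral_eq_integral[OF dens_integrable]) (simp add: dens_nonneg)
  finally show "emeasure (rho a N) (space (rho a N)) = 1" by (simp add: dens_integral)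
qed

lemma rho_real_distribution: "real_distribution (rho a N)"
proof -
  interpret prob_space "rho a N" by (rule rho_prob)
  show ?thesis by unfold_locales simp
qed

lemma rho_interval: "emeasure (rho a N) {-1<..1} = 1"
proof -
  have "emeasure (rho a N) {-1<..1} = (\<integral>\<^sup>+ t. ennreal (dens a N t) * indicator {-1<..1} t \<partial>lborel)"
    by (simp add: emeasure_rho)
  also have "\<dots> = (\<integral>\<^sup>+ t. ennreal (dens a N t) \<partial>lborel)"
    by (rule nn_integral_cong) (auto simp: dens_def indicator_def)
  also have "\<dots> = emeasure (rho a N) (space (rho a N))"
    by (simp add: emeasure_rho)
  also have "\<dots> = 1" using prob_space.emeasure_space_1[OF rho_prob] .
  finally show ?thesis .
qed

lemma rho_integral:
  assumes F: "continuous_on UNIV F"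
  shows "(\<integral>t. F (ee t) \<partial>rho a N) = complex_of_real (1 / Cn a N) * wI a N F"
proof -
  have Fm: "(\<lambda>t. F (ee t)) \<in> borel_measurable borel"
    by (intro borel_measurable_continuous_onI continuous_on_compose2[OF F continuous_ee]) auto
  have "(\<integral>t. F (ee t) \<partial>rho a N) = (LINT t|lborel. dens a N t *\<^sub>R F (ee t))"
    unfolding rho_def by (rule integral_density) (use Fm dens_meas dens_nonneg in auto)
  also have "\<dots> = (LINT t|lborel. (1 / Cn a N) *\<^sub>R (indicator {0..1} t *\<^sub>R (F (ee t) / (poly (pstar N (opuc a N)) (ee t) * cnj (poly (pstar N (opuc a N)) (ee t))))))"
  proof (rule Bochner_Integration.integral_cong[OF refl])
    fix t
    have "poly (pstar N (opuc a N)) (ee t) * cnj (poly (pstar N (opuc a N)) (ee t)) = complex_of_real ((cmod (poly (pstar N (opuc a N)) (ee t)))\<^sup>2)"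
      by (rule complex_norm_square[symmetric])
    then show "dens a N t *\<^sub>R F (ee t) = (1 / Cn a N) *\<^sub>R (indicator {0..1} t *\<^sub>R (F (ee t) / (poly (pstar N (opuc a N)) (ee t) * cnj (poly (pstar N (opuc a N)) (ee t)))))"
      by (simp add: dens_def Wt_def scaleR_conv_of_real divide_inverse mult_ac indicator_def)
  qed
  also have "\<dots> = (1 / Cn a N) *\<^sub>R wI a N F"
    unfolding wI_def set_lebesgue_integral_def by (rule integral_scaleR_right)
  finally show ?thesis by (simp add: scaleR_conv_of_real)
qed

end

lemma tight_rho:
  assumes a: "\<And>j. cmod (a j) < 1"
  shows "tight (rho a)"
  unfolding tight_def
proof (intro conjI allI impI)
  show "real_distribution (rho a n)" for n
    using rho_real_distribution[where a=a and N=n, OF a] .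
  fix e :: real assume e: "e > 0"
  have "measure (rho a n) {-1<..1} = 1" for n
    using rho_interval[where a=a and N=n, OF a] by (simp add: measure_def)
  then show "\<exists>x y. x < y \<and> (\<forall>n. 1 - e < measure (rho a n) {x<..y})"
    using e by (intro exI[of _ "-1"] exI[of _ 1]) auto
qed

lemma opuc_exists:
  assumes a: "\<And>j. cmod (a j) < 1"
  shows "\<exists>\<mu>. is_opuc_measure a \<mu>"
proof -
  obtain r M where r: "strict_mono (r :: nat \<Rightarrow> nat)" and M: "real_distribution M"
    and wc: "weak_conv_m (rho a \<circ> id \<circ> r) M"
    using tight_imp_convergent_subsubsequence[OF tight_rho[where a=a, OF a], of id] by (auto simp: strict_mono_def)
  interpret M: real_distribution M by (rule M)
  have eem: "ee \<in> measurable M borel"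
    unfolding measurable_cong_sets[OF M.events_eq_borel refl]
    by (intro borel_measurable_continuous_onI continuous_ee)
  define \<mu> where "\<mu> = distr M borel ee"
  have "is_opuc_measure a \<mu>"
    unfolding is_opuc_measure_def
  proof (intro conjI allI impI)
    show "sets \<mu> = sets borel" by (simp add: \<mu>_def)
    show "prob_space \<mu>" unfolding \<mu>_def by (rule M.prob_space_distr[OF eem])
    have "ee -` sphere 0 1 \<inter> space M = space M" by auto
    then show "emeasure \<mu> (sphere 0 1) = 1" unfolding \<mu>_def
      using M.emeasure_space_1 by (simp add: emeasure_distr[OF eem])
    fix n k :: nat assume kn: "k < n"
    define F where "F z = poly (opuc a n) z * cnj (z ^ k)" for z
    have Fc: "continuous_on UNIV F" unfolding F_def by (intro continuous_intros)
    have "(\<integral>z. F z \<partial>\<mu>) = (\<integral>t. F (ee t) \<partial>M)"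
      unfolding \<mu>_def by (rule integral_distr[OF eem]) (rule borel_measurable_continuous_onI[OF Fc])
    moreover have "(\<lambda>m. \<integral>t. F (ee t) \<partial>(rho a \<circ> id \<circ> r) m) \<longlonglongrightarrow> (\<integral>t. F (ee t) \<partial>M)"
    proof -
      have "compact (F ` sphere 0 1)"
        by (rule compact_continuous_image) (use Fc continuous_on_subset in auto)
      then obtain B where B0: "\<forall>x\<in>F ` sphere 0 1. norm x \<le> B"
        using compact_imp_bounded bounded_iff by blast
      have B: "norm (F (ee t)) \<le> B" for t using B0 by simp
      have cont: "isCont (\<lambda>t. F (ee t)) t" for t
        by (rule continuous_on_interior[of UNIV]) (auto intro!: continuous_on_compose2[OF Fc continuous_ee])
      show ?thesis
        by (rule weak_conv_imp_integral_bdd_continuous_conv[OF _ M wc cont B])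
           (simp add: rho_real_distribution[OF a])
    qed
    moreover have ev: "eventually (\<lambda>m. (\<integral>t. F (ee t) \<partial>(rho a \<circ> id \<circ> r) m) = 0) sequentially"
      unfolding eventually_sequentially
    proof (intro exI allI impI)
      fix m assume "n \<le> m"
      then have nr: "n \<le> r m" using seq_suble[OF r, of m] by linarith
      have "(\<integral>t. F (ee t) \<partial>(rho a \<circ> id \<circ> r) m) = complex_of_real (1 / Cn a (r m)) * wI a (r m) F"
        using rho_integral[OF a Fc] by simp
      also have "wI a (r m) F = 0" unfolding F_def by (rule BS_orth[OF a nr kn])
      finally show "(\<integral>t. F (ee t) \<partial>(rho a \<circ> id \<circ> r) m) = 0" by simp
    qed
    moreover have "(\<lambda>m. \<integral>t. F (ee t) \<partial>(rho a \<circ> id \<circ> r) m) \<longlonglongrightarrow> 0"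
      using ev by (rule tendsto_eventually)
    ultimately have "(\<integral>z. F z \<partial>\<mu>) = 0" using LIMSEQ_unique by metis
    then show "(\<integral>z. poly (opuc a n) z * cnj (z ^ k) \<partial>\<mu>) = 0" unfolding F_def .
  qed
  then show ?thesis by blast
qed

lemma simple_comp_preserving:
  assumes S: "S \<in> measurable M M" and surj: "surj S" and d: "distr M M S = M" and sp: "space M = UNIV"
    and g: "simple_function M g"
  shows "simple_function M (\<lambda>x. g (S x))" "integral\<^sup>S M (\<lambda>x. g (S x)) = integral\<^sup>S M g"
proof -
  have img: "(\<lambda>x. g (S x)) ` space M = g ` space M"
  proof -
    have "(\<lambda>x. g (S x)) ` UNIV = g ` (S ` UNIV)" by (simp add: image_image)
    then show ?thesis using surj sp by simp
  qed
  have pre: "(\<lambda>x. g (S x)) -` {y} \<inter> space M = S -` (g -` {y} \<inter> space M) \<inter> space M" for y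
    using sp by auto
  have gs: "g -` {y} \<inter> space M \<in> sets M" if "y \<in> g ` space M" for y
    using g that unfolding simple_function_def by blast
  show "simple_function M (\<lambda>x. g (S x))"
    unfolding simple_function_def img pre
    using g gs measurable_sets[OF S] unfolding simple_function_def by blast
  have em: "emeasure M (S -` (g -` {y} \<inter> space M) \<inter> space M) = emeasure M (g -` {y} \<inter> space M)"
    if "y \<in> g ` space M" for y
  proof -
    have "emeasure M (S -` (g -` {y} \<inter> space M) \<inter> space M) = emeasure (distr M M S) (g -` {y} \<inter> space M)"
      by (rule emeasure_distr[OF S gs[OF that], symmetric])
    then show ?thesis using d by simp
  qed
  show "integral\<^sup>S M (\<lambda>x. g (S x)) = integral\<^sup>S M g"
    unfolding simple_integral_def img pre using em by (intro sum.cong refl) simp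
qed

lemma nn_integral_le_comp_preserving:
  assumes S: "S \<in> measurable M M" and surj: "surj S" and d: "distr M M S = M" and sp: "space M = UNIV"
  shows "(\<integral>\<^sup>+ x. f x \<partial>M) \<le> (\<integral>\<^sup>+ x. f (S x) \<partial>M)"
proof -
  have "integral\<^sup>S M h \<le> (\<integral>\<^sup>+ x. f (S x) \<partial>M)" if h: "simple_function M h" "h \<le> f" for h
  proof -
    have "integral\<^sup>S M h = integral\<^sup>S M (\<lambda>x. h (S x))"
      using simple_comp_preserving(2)[OF S surj d sp h(1)] by simp
    also have "\<dots> = (\<integral>\<^sup>+ x. h (S x) \<partial>M)"
      using nn_integral_eq_simple_integral[OF simple_comp_preserving(1)[OF S surj d sp h(1)]] by simp
    also have "\<dots> \<le> (\<integral>\<^sup>+ x. f (S x) \<partial>M)"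
      using h(2) by (intro nn_integral_mono) (auto simp: le_fun_def)
    finally show ?thesis .
  qed
  then show ?thesis unfolding nn_integral_def[of M f] by (intro SUP_least) auto
qed

context
  fixes \<nu> :: "nat \<Rightarrow> complex measure"
  assumes prob: "\<And>n. prob_space (\<nu> n)"
    and sb: "\<And>n. sets (\<nu> n) = sets borel"
    and ball1: "\<And>n. emeasure (\<nu> n) (ball 0 1) = 1"
    and rinv: "\<And>n c. cmod c = 1 \<Longrightarrow> distr (\<nu> n) borel (\<lambda>z. c * z) = \<nu> n"
begin

lemma pps: "product_prob_space \<nu>"
  unfolding product_prob_space_def product_sigma_finite_def product_prob_space_axioms_def
  using prob by (auto intro: prob_space_imp_sigma_finite)

lemma space_nu[simp]: "space (\<nu> n) = UNIV"
  using sets_eq_imp_space_eq[OF sb[of n]] by simp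

lemma space_Q[simp]: "space (\<Pi>\<^sub>M n\<in>UNIV. \<nu> n) = UNIV"
  by (simp add: space_PiM PiE_UNIV_domain)

lemma sets_Q: "sets (\<Pi>\<^sub>M n\<in>UNIV. \<nu> n) = sets (\<Pi>\<^sub>M n\<in>UNIV. (borel :: complex measure))"
  by (rule sets_PiM_cong) (auto simp: sb)

lemma rot_meas_borel: "(\<lambda>\<alpha> n. c ^ Suc n * \<alpha> n) \<in> measurable (\<Pi>\<^sub>M n\<in>UNIV. (borel :: complex measure)) (\<Pi>\<^sub>M n\<in>UNIV. (borel :: complex measure))"
proof (rule measurable_PiM_single'[where f="\<lambda>n \<alpha>. c ^ Suc n * \<alpha> n"])
  fix i :: nat
  have "(\<lambda>\<alpha>. \<alpha> i) \<in> measurable (\<Pi>\<^sub>M n\<in>UNIV. (borel :: complex measure)) borel"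
    by (rule measurable_component_singleton) simp
  then show "(\<lambda>\<alpha>. c ^ Suc i * \<alpha> i) \<in> measurable (\<Pi>\<^sub>M n\<in>UNIV. (borel :: complex measure)) borel"
    by measurable
qed (auto simp: space_PiM)

lemma rot_meas: "(\<lambda>\<alpha> n. c ^ Suc n * \<alpha> n) \<in> measurable (\<Pi>\<^sub>M n\<in>UNIV. \<nu> n) (\<Pi>\<^sub>M n\<in>UNIV. \<nu> n)"
  using rot_meas_borel unfolding measurable_cong_sets[OF sets_Q sets_Q] .

lemma prod_emb_UNIV: "prod_emb UNIV \<nu> J (Pi\<^sub>E J G) = {x. \<forall>j\<in>J. x j \<in> G j}"
  by (auto simp: prod_emb_def PiE_def Pi_def extensional_def)

lemma Q_rot_invariant:
  assumes c: "cmod c = 1"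
  shows "distr (\<Pi>\<^sub>M n\<in>UNIV. \<nu> n) (\<Pi>\<^sub>M n\<in>UNIV. \<nu> n) (\<lambda>\<alpha> n. c ^ Suc n * \<alpha> n) = (\<Pi>\<^sub>M n\<in>UNIV. \<nu> n)"
proof (rule product_prob_space.PiM_eq[OF pps])
  show "sets (distr (\<Pi>\<^sub>M n\<in>UNIV. \<nu> n) (\<Pi>\<^sub>M n\<in>UNIV. \<nu> n) (\<lambda>\<alpha> n. c ^ Suc n * \<alpha> n)) = sets (\<Pi>\<^sub>M n\<in>UNIV. \<nu> n)"
    by simp
  fix J :: "nat set" and F assume J: "finite J" "J \<subseteq> UNIV" and F: "\<And>j. j \<in> J \<Longrightarrow> F j \<in> sets (\<nu> j)"
  define G where "G j = (\<lambda>z. c ^ Suc j * z) -` F j" for j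
  have mj: "(\<lambda>z. c ^ Suc j * z) \<in> measurable (\<nu> j) borel" for j
    unfolding measurable_cong_sets[OF sb refl] by (intro borel_measurable_continuous_onI continuous_intros)
  have Gs: "G j \<in> sets (\<nu> j)" if "j \<in> J" for j
    using measurable_sets[OF mj F[OF that, unfolded sb]] by (simp add: G_def)
  have pre: "(\<lambda>\<alpha> n. c ^ Suc n * \<alpha> n) -` prod_emb UNIV \<nu> J (Pi\<^sub>E J F) \<inter> space (\<Pi>\<^sub>M n\<in>UNIV. \<nu> n)
      = prod_emb UNIV \<nu> J (Pi\<^sub>E J G)"
    by (simp add: prod_emb_UNIV G_def)
  have eG: "emeasure (\<nu> j) (G j) = emeasure (\<nu> j) (F j)" if "j \<in> J" for j
  proof -
    have "cmod (c ^ Suc j) = 1" using c by (simp only: norm_power) simp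
    then have "emeasure (\<nu> j) (F j) = emeasure (distr (\<nu> j) borel (\<lambda>z. c ^ Suc j * z)) (F j)"
      using rinv by simp
    also have "\<dots> = emeasure (\<nu> j) (G j)"
      using F[OF that] by (subst emeasure_distr[OF mj]) (auto simp: sb G_def)
    finally show ?thesis by simp
  qed
  show "emeasure (distr (\<Pi>\<^sub>M n\<in>UNIV. \<nu> n) (\<Pi>\<^sub>M n\<in>UNIV. \<nu> n) (\<lambda>\<alpha> n. c ^ Suc n * \<alpha> n)) (prod_emb UNIV \<nu> J (Pi\<^sub>E J F))
      = (\<Prod>j\<in>J. emeasure (\<nu> j) (F j))"
  proof -
    have ms: "prod_emb UNIV \<nu> J (Pi\<^sub>E J F) \<in> sets (\<Pi>\<^sub>M n\<in>UNIV. \<nu> n)"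
      using J F by (intro sets_PiM_I) auto
    have "emeasure (distr (\<Pi>\<^sub>M n\<in>UNIV. \<nu> n) (\<Pi>\<^sub>M n\<in>UNIV. \<nu> n) (\<lambda>\<alpha> n. c ^ Suc n * \<alpha> n)) (prod_emb UNIV \<nu> J (Pi\<^sub>E J F))
        = emeasure (\<Pi>\<^sub>M n\<in>UNIV. \<nu> n) (prod_emb UNIV \<nu> J (Pi\<^sub>E J G))"
      unfolding emeasure_distr[OF rot_meas ms] pre ..
    also have "\<dots> = (\<Prod>j\<in>J. emeasure (\<nu> j) (G j))"
      by (rule product_prob_space.emeasure_PiM_emb[OF pps]) (use J Gs in auto)
    also have "\<dots> = (\<Prod>j\<in>J. emeasure (\<nu> j) (F j))"
      by (rule prod.cong[OF refl eG])
    finally show ?thesis .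
  qed
qed

lemma Q_AE_disc: "AE \<alpha> in (\<Pi>\<^sub>M n\<in>UNIV. \<nu> n). \<forall>j. cmod (\<alpha> j) < 1"
proof -
  have "AE \<alpha> in (\<Pi>\<^sub>M n\<in>UNIV. \<nu> n). \<alpha> j \<in> ball 0 1" for j
  proof -
    interpret pj: prob_space "\<nu> j" by (rule prob)
    have "AE z in \<nu> j. z \<in> ball 0 1"
      using pj.AE_in_set_eq_1[of "ball 0 1"] ball1[of j] by (simp add: sb measure_def)
    then have "AE z in distr (\<Pi>\<^sub>M n\<in>UNIV. \<nu> n) (\<nu> j) (\<lambda>\<omega>. \<omega> j). z \<in> ball 0 1"
      by (subst product_prob_space.PiM_component[OF pps]) simp_all
    then show ?thesis
      by (subst (asm) AE_distr_iff) (auto simp: sb)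
  qed
  then show ?thesis by (subst AE_all_countable) simp
qed

end

lemma mu_alpha_good:
  assumes "\<And>j. cmod (a j) < 1"
  shows "is_opuc_measure a (mu_alpha a)"
proof -
  obtain \<mu> where "is_opuc_measure a \<mu>" using opuc_exists[where a=a, OF assms] by blast
  then show ?thesis using mu_alpha_eq by simp
qed

lemma mu_alpha_rot:
  assumes l: "cmod l = 1" and a: "\<And>j. cmod (a j) < 1"
  shows "mu_alpha (\<lambda>n. l ^ Suc n * a n) = distr (mu_alpha a) borel (\<lambda>z. cnj l * z)"
  by (rule mu_alpha_eq[OF is_opuc_rot[OF l mu_alpha_good[OF a]]])

theorem mainTheorem9:
  fixes \<nu> :: "nat \<Rightarrow> complex measure" and l :: complex
  assumes "\<And>n. prob_space (\<nu> n)"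
    and "\<And>n. sets (\<nu> n) = sets borel"
    and "\<And>n. emeasure (\<nu> n) (ball 0 1) = 1"
    and "\<And>n c. cmod c = 1 \<Longrightarrow> distr (\<nu> n) borel (\<lambda>z. c * z) = \<nu> n"
    and "cmod l = 1"
  shows "distr (joint_P (\<Pi>\<^sub>M n\<in>UNIV. \<nu> n)) (joint_P (\<Pi>\<^sub>M n\<in>UNIV. \<nu> n))
           (\<lambda>(\<alpha>, z). (\<lambda>n. l ^ Suc n * \<alpha> n, cnj l * z))
         = joint_P (\<Pi>\<^sub>M n\<in>UNIV. \<nu> n)"
proof -
  note nu = assms(1-4)
  have l: "cmod l = 1" by (rule assms(5))
  have lc: "cmod (cnj l) = 1" using l by simp
  define Q where "Q = (\<Pi>\<^sub>M n\<in>UNIV. \<nu> n)"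
  define rot where "rot = (\<lambda>(\<alpha>::nat \<Rightarrow> complex) n. l ^ Suc n * \<alpha> n)"
  define rot' where "rot' = (\<lambda>(\<alpha>::nat \<Rightarrow> complex) n. cnj l ^ Suc n * \<alpha> n)"
  define T where "T = (\<lambda>(\<alpha>::nat \<Rightarrow> complex, z::complex). (\<lambda>n. l ^ Suc n * \<alpha> n, cnj l * z))"
  define F where "F S = (\<integral>\<^sup>+ \<alpha>. emeasure (mu_alpha \<alpha>) (Pair \<alpha> -` S) \<partial>Q)" for S
  define \<Omega> where "\<Omega> = space seq_circ_space"
  define \<Sigma> where "\<Sigma> = sets seq_circ_space"
  define M where "M = joint_P Q"
  have \<Omega>: "\<Omega> = UNIV" unfolding \<Omega>_def seq_circ_space_def by (simp add: space_pair_measure space_PiM PiE_UNIV_domain)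
  have sig: "sigma_sets \<Omega> \<Sigma> = \<Sigma>" unfolding \<Omega>_def \<Sigma>_def by (rule sets.sigma_sets_eq)
  have MM: "M = measure_of \<Omega> \<Sigma> F" unfolding M_def joint_P_def \<Omega>_def \<Sigma>_def F_def by simp
  have sM: "sets M = \<Sigma>" unfolding MM using sets_measure_of[OF sets.space_closed[of seq_circ_space]] sig
    by (simp add: \<Omega>_def \<Sigma>_def)
  have spM: "space M = UNIV" unfolding MM using \<Omega> by simp
  have eM: "emeasure M S = (if measure_space \<Omega> \<Sigma> F then F S else 0)" if "S \<in> \<Sigma>" for S
    unfolding MM emeasure_measure_of_conv sig using that by simp
  have Tm: "T \<in> measurable seq_circ_space seq_circ_space"
  proof -
    have "T = (\<lambda>p. (rot (fst p), cnj l * snd p))" by (auto simp: T_def rot_def fun_eq_iff split_beta)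
    moreover have "(\<lambda>p. (rot (fst p), cnj l * snd p)) \<in> measurable seq_circ_space seq_circ_space"
      unfolding seq_circ_space_def
    proof (rule measurable_Pair)
      show "(\<lambda>p. rot (fst p)) \<in> measurable ((\<Pi>\<^sub>M n\<in>UNIV. (borel::complex measure)) \<Otimes>\<^sub>M borel) (\<Pi>\<^sub>M n\<in>UNIV. (borel::complex measure))"
        unfolding rot_def by (rule measurable_compose[OF measurable_fst rot_meas_borel[where \<nu>=\<nu>, OF nu]])
      show "(\<lambda>p. cnj l * snd p) \<in> borel_measurable ((\<Pi>\<^sub>M n\<in>UNIV. (borel::complex measure)) \<Otimes>\<^sub>M borel)"
        by measurable
    qed
    ultimately show ?thesis by simp
  qed
  have sM': "sets M = sets seq_circ_space" using sM unfolding \<Sigma>_def .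
  have TmM: "T \<in> measurable M M" using Tm by (simp add: measurable_cong_sets[OF sM' sM'])
  have spQ: "space Q = UNIV" unfolding Q_def using space_Q[where \<nu>=\<nu>, OF nu] .
  have rotm: "rot \<in> measurable Q Q" unfolding Q_def rot_def by (rule rot_meas[where \<nu>=\<nu>, OF nu])
  have rot'm: "rot' \<in> measurable Q Q" unfolding Q_def rot'_def by (rule rot_meas[where \<nu>=\<nu>, OF nu])
  have rrot: "rot (rot' \<alpha>) = \<alpha>" for \<alpha>
  proof -
    have "l ^ Suc n * (cnj l ^ Suc n * \<alpha> n) = \<alpha> n" for n
    proof -
      have "l ^ Suc n * cnj l ^ Suc n = (l * cnj l) ^ Suc n" by (simp add: power_mult_distrib)
      also have "\<dots> = 1" using unit_cnj_mult[OF l] by simp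
      finally show ?thesis by (simp add: mult.assoc[symmetric])
    qed
    then show ?thesis unfolding rot_def rot'_def by (intro ext) (simp only:)
  qed
  have rot'rot: "rot' (rot \<alpha>) = \<alpha>" for \<alpha>
  proof -
    have "cnj l ^ Suc n * (l ^ Suc n * \<alpha> n) = \<alpha> n" for n
    proof -
      have "cnj l ^ Suc n * l ^ Suc n = (l * cnj l) ^ Suc n" by (simp add: power_mult_distrib mult_ac)
      also have "\<dots> = 1" using unit_cnj_mult[OF l] by simp
      finally show ?thesis by (simp add: mult.assoc[symmetric])
    qed
    then show ?thesis unfolding rot_def rot'_def by (intro ext) (simp only:)
  qed
  have surj_rot: "surj rot" using rrot by (metis surjI)
  have surj_rot': "surj rot'" using rot'rot by (metis surjI)
  have drot: "distr Q Q rot = Q" unfolding Q_def rot_def by (rule Q_rot_invariant[where \<nu>=\<nu>, OF nu l])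
  have drot': "distr Q Q rot' = Q" unfolding Q_def rot'_def by (rule Q_rot_invariant[where \<nu>=\<nu>, OF nu lc])
  have int_inv: "(\<integral>\<^sup>+ \<alpha>. G (rot \<alpha>) \<partial>Q) = (\<integral>\<^sup>+ \<alpha>. G \<alpha> \<partial>Q)" for G :: "(nat \<Rightarrow> complex) \<Rightarrow> ennreal"
  proof (rule antisym)
    have "(\<integral>\<^sup>+ \<alpha>. G (rot \<alpha>) \<partial>Q) \<le> (\<integral>\<^sup>+ \<alpha>. G (rot (rot' \<alpha>)) \<partial>Q)"
      by (rule nn_integral_le_comp_preserving[OF rot'm surj_rot' drot' spQ])
    then show "(\<integral>\<^sup>+ \<alpha>. G (rot \<alpha>) \<partial>Q) \<le> (\<integral>\<^sup>+ \<alpha>. G \<alpha> \<partial>Q)" by (simp add: rrot)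
    show "(\<integral>\<^sup>+ \<alpha>. G \<alpha> \<partial>Q) \<le> (\<integral>\<^sup>+ \<alpha>. G (rot \<alpha>) \<partial>Q)"
      by (rule nn_integral_le_comp_preserving[OF rotm surj_rot drot spQ])
  qed
  have aed: "AE \<alpha> in Q. \<forall>j. cmod (\<alpha> j) < 1"
    unfolding Q_def by (rule Q_AE_disc) (fact assms)+
  have FT: "F (T -` A) = F A" if A: "A \<in> \<Sigma>" for A
  proof -
    define G where "G \<beta> = emeasure (mu_alpha \<beta>) (Pair \<beta> -` A)" for \<beta>
    have A': "A \<in> sets ((\<Pi>\<^sub>M n\<in>UNIV. (borel::complex measure)) \<Otimes>\<^sub>M borel)"
      using A unfolding \<Sigma>_def seq_circ_space_def .
    have "AE \<alpha> in Q. emeasure (mu_alpha \<alpha>) (Pair \<alpha> -` (T -` A)) = G (rot \<alpha>)"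
      using aed
    proof eventually_elim
      case (elim \<alpha>)
      have good: "is_opuc_measure \<alpha> (mu_alpha \<alpha>)" using mu_alpha_good[of \<alpha>] elim by blast
      have rr: "mu_alpha (rot \<alpha>) = distr (mu_alpha \<alpha>) borel (\<lambda>z. cnj l * z)"
        unfolding rot_def using mu_alpha_rot[OF l, of \<alpha>] elim by blast
      have se: "sets (mu_alpha \<alpha>) = sets borel" and sp: "space (mu_alpha \<alpha>) = UNIV"
        using opuc_basic(1,5)[OF good] by auto
      have mm: "(\<lambda>z. cnj l * z) \<in> measurable (mu_alpha \<alpha>) borel"
        unfolding measurable_cong_sets[OF se refl] by (intro borel_measurable_continuous_onI continuous_intros)
      have "G (rot \<alpha>) = emeasure (distr (mu_alpha \<alpha>) borel (\<lambda>z. cnj l * z)) (Pair (rot \<alpha>) -` A)"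
        unfolding G_def rr ..
      also have "\<dots> = emeasure (mu_alpha \<alpha>) ((\<lambda>z. cnj l * z) -` (Pair (rot \<alpha>) -` A) \<inter> space (mu_alpha \<alpha>))"
        by (rule emeasure_distr[OF mm]) (use sets_Pair1[OF A'] in simp)
      also have "(\<lambda>z. cnj l * z) -` (Pair (rot \<alpha>) -` A) \<inter> space (mu_alpha \<alpha>) = Pair \<alpha> -` (T -` A)"
        by (auto simp: sp T_def rot_def)
      finally show ?case by simp
    qed
    then have "F (T -` A) = (\<integral>\<^sup>+ \<alpha>. G (rot \<alpha>) \<partial>Q)" unfolding F_def by (rule nn_integral_cong_AE)
    also have "\<dots> = (\<integral>\<^sup>+ \<alpha>. G \<alpha> \<partial>Q)" by (rule int_inv)
    also have "\<dots> = F A" unfolding F_def G_def ..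
    finally show ?thesis .
  qed
  have "distr M M T = M"
  proof (rule measure_eqI)
    show "sets (distr M M T) = sets M" by simp
    fix A assume "A \<in> sets (distr M M T)"
    then have A: "A \<in> \<Sigma>" using sM by simp
    have TA: "T -` A \<in> \<Sigma>" using measurable_sets[OF Tm A[unfolded \<Sigma>_def]] unfolding \<Sigma>_def \<Omega>
      by (simp add: \<Omega>[unfolded \<Omega>_def])
    have "emeasure (distr M M T) A = emeasure M (T -` A)"
      using emeasure_distr[OF TmM, of A] A sM spM by simp
    also have "\<dots> = emeasure M A" using eM[OF TA] eM[OF A] FT[OF A] by simp
    finally show "emeasure (distr M M T) A = emeasure M A" .
  qed
  then show ?thesis unfolding M_def Q_def T_def .
qed

end
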